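(* If an $n$-agent network is $(k+1)$-redundant with $k\ge 0$, then it is $k$-redundant.
   Context: An $n$-agent network: agents $\mathcal V=\{1,\dots,n\}$, each agent $i$ having real matrices $A_i\in\mathbb R^{r_i\times d}$, $b_i\in\mathbb R^{r_i}$. The network is $k$-redundant ($k\in\{0,1,\dots,n-1\}$) if for any $\mathcal S_1,\mathcal S_2\subset\mathcal V$ with $|\mathcal S_1|=|\mathcal S_2|=n-k$, $\arg\min_x\sum_{i\in\mathcal S_1}\|A_ix-b_i\|_2^2=\arg\min_x\sum_{i\in\mathcal S_2}\|A_ix-b_i\|_2^2$ (so $(k+1)$-redundancy presupposes $k+1\le n-1$). *)

theory Defs
  imports "HOL-Analysis.Analysis"
begin

text \<open>Agent i has r i rows; row j of A_i is the vector A i j in R^d (d = CARD('d)),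
  and b_i has entries b i j. Then the squared norm of A_i x - b_i is the sum of the
  squared residuals over the r i rows.\<close>

definition agent_cost :: "(nat \<Rightarrow> nat \<Rightarrow> real^'d) \<Rightarrow> (nat \<Rightarrow> nat \<Rightarrow> real) \<Rightarrow> (nat \<Rightarrow> nat)
    \<Rightarrow> nat \<Rightarrow> real^'d \<Rightarrow> real" where
  "agent_cost A b r i x = (\<Sum>j<r i. (A i j \<bullet> x - b i j)\<^sup>2)"

definition agg_cost :: "(nat \<Rightarrow> nat \<Rightarrow> real^'d) \<Rightarrow> (nat \<Rightarrow> nat \<Rightarrow> real) \<Rightarrow> (nat \<Rightarrow> nat)
    \<Rightarrow> nat set \<Rightarrow> real^'d \<Rightarrow> real" where
  "agg_cost A b r S x = (\<Sum>i\<in>S. agent_cost A b r i x)"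

definition argmin_set :: "('a \<Rightarrow> real) \<Rightarrow> 'a set" where
  "argmin_set f = {x. \<forall>y. f x \<le> f y}"

definition k_redundant :: "nat \<Rightarrow> (nat \<Rightarrow> nat \<Rightarrow> real^'d) \<Rightarrow> (nat \<Rightarrow> nat \<Rightarrow> real)
    \<Rightarrow> (nat \<Rightarrow> nat) \<Rightarrow> nat \<Rightarrow> bool" where
  "k_redundant n A b r k \<longleftrightarrow> k < n \<and>
     (\<forall>S1 S2. S1 \<subseteq> {1..n} \<and> S2 \<subseteq> {1..n} \<and> card S1 = n - k \<and> card S2 = n - k \<longrightarrow>
        argmin_set (agg_cost A b r S1) = argmin_set (agg_cost A b r S2))"

end

theory Submission imports Defs begin

lemma lsq_exists:
  fixes a :: "'q \<Rightarrow> 'a::euclidean_space" and c :: "'q \<Rightarrow> real"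
  assumes fin: "finite I"
  shows "\<exists>x0. \<forall>y. (\<Sum>q\<in>I. (a q \<bullet> x0 - c q)\<^sup>2) \<le> (\<Sum>q\<in>I. (a q \<bullet> y - c q)\<^sup>2)"
proof -
  define M where "M x = (\<Sum>q\<in>I. (a q \<bullet> x) *\<^sub>R a q)" for x
  define p where "p = (\<Sum>q\<in>I. c q *\<^sub>R a q)"
  have Mi: "z \<bullet> M x = (\<Sum>q\<in>I. (a q \<bullet> x) * (a q \<bullet> z))" for x z
    by (simp add: M_def inner_sum_right inner_commute)
  have pi: "z \<bullet> p = (\<Sum>q\<in>I. c q * (a q \<bullet> z))" for z
    by (simp add: p_def inner_sum_right inner_commute)
  have sub: "subspace (range M)"
    unfolding subspace_def
  proof (intro conjI ballI allI)
    show "0 \<in> range M" by (rule range_eqI[of _ _ 0]) (simp add: M_def)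
    fix u v assume "u \<in> range M" "v \<in> range M"
    then obtain x y where "u = M x" "v = M y" by auto
    then show "u + v \<in> range M"
      by (intro range_eqI[of _ _ "x + y"]) (simp add: M_def inner_add_right scaleR_add_left sum.distrib)
  next
    fix t u assume "u \<in> range M"
    then obtain x where "u = M x" by auto
    then show "t *\<^sub>R u \<in> range M"
      by (intro range_eqI[of _ _ "t *\<^sub>R x"]) (simp add: M_def scaleR_sum_right)
  qed
  obtain m z where m: "m \<in> span (range M)" and z: "\<And>w. w \<in> span (range M) \<Longrightarrow> orthogonal z w"
     and pz: "p = m + z"
    using orthogonal_subspace_decomp_exists by blast
  have "orthogonal z (M z)" using z by (simp add: span_base)
  hence "(\<Sum>q\<in>I. (a q \<bullet> z)\<^sup>2) = 0" using Mi[of z z] by (simp add: orthogonal_def power2_eq_square)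
  hence az: "\<forall>q\<in>I. a q \<bullet> z = 0" using fin by (simp add: sum_nonneg_eq_0_iff)
  have "z \<bullet> p = 0" using pi[of z] az by simp
  moreover have "z \<bullet> m = 0" using z[OF m] by (simp add: orthogonal_def)
  ultimately have "z \<bullet> z = 0" using pz by (simp add: inner_add_right)
  hence "z = 0" by simp
  hence "p \<in> range M" using m pz sub by (metis add.right_neutral span_eq_iff)
  then obtain x0 where x0: "M x0 = p" by auto
  show ?thesis
  proof (intro exI allI)
    fix y
    define d where "d = y - x0"
    have "(\<Sum>q\<in>I. (a q \<bullet> y - c q)\<^sup>2) = (\<Sum>q\<in>I. (a q \<bullet> x0 - c q)\<^sup>2 + (a q \<bullet> d)\<^sup>2 + 2 * ((a q \<bullet> x0) * (a q \<bullet> d) - c q * (a q \<bullet> d)))"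
      by (rule sum.cong) (auto simp: d_def inner_diff_right power2_eq_square algebra_simps)
    also have "\<dots> = (\<Sum>q\<in>I. (a q \<bullet> x0 - c q)\<^sup>2) + (\<Sum>q\<in>I. (a q \<bullet> d)\<^sup>2) + 2 * (d \<bullet> M x0 - d \<bullet> p)"
      by (simp add: Mi pi sum.distrib sum_subtractf sum_distrib_left)
    also have "\<dots> \<ge> (\<Sum>q\<in>I. (a q \<bullet> x0 - c q)\<^sup>2)" using x0 by (simp add: sum_nonneg)
    finally show "(\<Sum>q\<in>I. (a q \<bullet> x0 - c q)\<^sup>2) \<le> (\<Sum>q\<in>I. (a q \<bullet> y - c q)\<^sup>2)" .
  qed
qed

lemma argmin_nonempty:
  assumes "finite S"
  shows "argmin_set (agg_cost A b r S) \<noteq> {}"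
proof -
  have eq: "agg_cost A b r S x = (\<Sum>q\<in>Sigma S (\<lambda>i. {..<r i}). (A (fst q) (snd q) \<bullet> x - b (fst q) (snd q))\<^sup>2)" for x
    unfolding agg_cost_def agent_cost_def using assms by (simp add: sum.Sigma case_prod_beta)
  obtain x0 where "\<forall>y. (\<Sum>q\<in>Sigma S (\<lambda>i. {..<r i}). (A (fst q) (snd q) \<bullet> x0 - b (fst q) (snd q))\<^sup>2)
     \<le> (\<Sum>q\<in>Sigma S (\<lambda>i. {..<r i}). (A (fst q) (snd q) \<bullet> y - b (fst q) (snd q))\<^sup>2)"
    using lsq_exists[of "Sigma S (\<lambda>i. {..<r i})" "\<lambda>q. A (fst q) (snd q)" "\<lambda>q. b (fst q) (snd q)"] assms by blast
  hence "x0 \<in> argmin_set (agg_cost A b r S)" unfolding argmin_set_def eq by simp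
  thus ?thesis by blast
qed

lemma key:
  assumes fin: "finite S" and c2: "card S \<ge> 2" and Xne: "X \<noteq> {}"
    and H: "\<And>i. i \<in> S \<Longrightarrow> argmin_set (agg_cost A b r (S - {i})) = X"
  shows "argmin_set (agg_cost A b r S) = X"
proof -
  define F where "F = agg_cost A b r S"
  define g where "g i = agg_cost A b r (S - {i})" for i
  have gF: "g i x = F x - agent_cost A b r i x" if "i \<in> S" for i x
    using that fin unfolding g_def F_def agg_cost_def by (simp add: sum_diff1)
  have G: "(\<Sum>i\<in>S. g i x) = (real (card S) - 1) * F x" for x
  proof -
    have "(\<Sum>i\<in>S. g i x) = (\<Sum>i\<in>S. F x - agent_cost A b r i x)" by (rule sum.cong) (auto simp: gF)
    also have "\<dots> = real (card S) * F x - F x" by (simp add: sum_subtractf F_def agg_cost_def)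
    finally show ?thesis by (simp add: algebra_simps)
  qed
  have cpos: "real (card S) - 1 > 0" using c2 by simp
  have gmin: "g i x \<le> g i z" if "i \<in> S" "x \<in> X" for i x z
    using H[OF that(1)] that(2) unfolding argmin_set_def g_def by blast
  have "argmin_set F = X"
  proof
    show "argmin_set F \<subseteq> X"
    proof
      fix y assume y: "y \<in> argmin_set F"
      obtain x where x: "x \<in> X" using Xne by blast
      have "F y \<le> F x" using y unfolding argmin_set_def by simp
      hence "(\<Sum>i\<in>S. g i y) \<le> (\<Sum>i\<in>S. g i x)" using G cpos by simp
      hence "(\<Sum>i\<in>S. g i y - g i x) \<le> 0" by (simp add: sum_subtractf)
      moreover have "\<forall>i\<in>S. g i y - g i x \<ge> 0" using gmin x by auto
      ultimately have "\<forall>i\<in>S. g i y - g i x = 0" using fin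
        by (metis (no_types, lifting) order_antisym_conv sum_nonneg sum_nonneg_eq_0_iff)
      moreover obtain i where i: "i \<in> S" using c2 by fastforce
      ultimately have "g i y = g i x" by simp
      hence "\<forall>z. agg_cost A b r (S - {i}) y \<le> agg_cost A b r (S - {i}) z"
        using gmin[OF i x] unfolding g_def by simp
      thus "y \<in> X" using H[OF i] unfolding argmin_set_def by blast
    qed
  next
    show "X \<subseteq> argmin_set F"
    proof
      fix x assume x: "x \<in> X"
      have "F x \<le> F z" for z
      proof -
        have "(\<Sum>i\<in>S. g i x) \<le> (\<Sum>i\<in>S. g i z)" by (rule sum_mono) (use gmin x in auto)
        thus ?thesis using G cpos by simp
      qed
      thus "x \<in> argmin_set F" unfolding argmin_set_def by simp
    qed
  qed
  thus ?thesis by (simp add: F_def)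
qed

theorem corollary2:
  fixes n k :: nat and A :: "nat \<Rightarrow> nat \<Rightarrow> real^'d" and b :: "nat \<Rightarrow> nat \<Rightarrow> real"
    and r :: "nat \<Rightarrow> nat"
  assumes "k_redundant n A b r (k + 1)"
  shows "k_redundant n A b r k"
proof -
  have kn: "k + 1 < n" and H: "\<And>S1 S2. S1 \<subseteq> {1..n} \<Longrightarrow> S2 \<subseteq> {1..n} \<Longrightarrow> card S1 = n - (k+1)
      \<Longrightarrow> card S2 = n - (k+1) \<Longrightarrow> argmin_set (agg_cost A b r S1) = argmin_set (agg_cost A b r S2)"
    using assms unfolding k_redundant_def by blast+
  define T0 where "T0 = {1..n - (k+1)}"
  have T0: "T0 \<subseteq> {1..n}" "card T0 = n - (k+1)" unfolding T0_def by auto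
  define X where "X = argmin_set (agg_cost A b r T0)"
  have Xne: "X \<noteq> {}" unfolding X_def by (rule argmin_nonempty) (simp add: T0_def)
  have all: "argmin_set (agg_cost A b r S) = X" if "S \<subseteq> {1..n}" "card S = n - k" for S
  proof (rule key[OF _ _ Xne])
    show fS: "finite S" using that(1) finite_subset by blast
    show "2 \<le> card S" using that kn by simp
    fix i assume "i \<in> S"
    hence "card (S - {i}) = n - (k+1)" using that fS by simp
    thus "argmin_set (agg_cost A b r (S - {i})) = X" unfolding X_def
      using H[of "S - {i}" T0] T0 that(1) by blast
  qed
  show ?thesis unfolding k_redundant_def using kn all by auto
qed
end
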